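(* For every pair of positive integers $g,k$, every graph $G_{g,k}$ obtained by the construction described in the context has a proper edge-colouring in which each cycle contains no colour exactly once.
   Context: Hypergraph notions. A closed walk of length $\ell$ in a hypergraph $H$ is a sequence $v_0F_0v_1F_1\ldots F_{\ell-1}v_0$ with $v_i,v_{i+1}\in F_i$ for all $0\le i<\ell$ (indices mod $\ell$), $F_i\ne F_{i+1}$ for all $i$ (indices mod $\ell$), and $v_1,\ldots,v_{\ell-1}$ pairwise distinct. An $r$-uniform hypergraph $H$ is tranquil, witnessed by labellings $\lambda=\{\lambda_F\}_{F\in E(H)}$ with $\lambda_F:F\to\{1,\dots,r\}$, if for every closed walk $W=v_0F_0\ldots F_{\ell-1}v_0$ the multigraph on $\{1,\dots,r\}$ with edge multiset $\{\lambda_{F_i}(v_i)\lambda_{F_i}(v_{i+1}):0\le i<\ell\}$ is bridgeless. The chromatic number of a hypergraph is the least number of colours in a vertex colouring with no monochromatic hyperedge; its girth is the length of a shortest Berge cycle (distinct hyperedges $F_1,\dots,F_\ell$ and distinct vertices $x_1,\dots,x_\ell$ with $x_i\in F_i\cap F_{i+1}$, indices mod $\ell$). Construction. Fix a positive integer $g$. $G_{g,1}$ is a single vertex. For $k\ge 2$, given a graph $G_{g,k-1}$ obtained by the construction, with vertex set identified with $\{1,\dots,r\}$, take a finite tranquil $r$-uniform hypergraph $H$ with chromatic number at least $k$ and girth at least $\lceil g/3\rceil$, together with tranquility-witnessing labellings $\lambda_F$, each $\lambda_F:F\to\{1,\dots,r\}$ a bijection. The graph $G_{g,k}$ consists of an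 independent set $T$ with a bijection $\nu:T\to V(H)$, together with, for each hyperedge $F\in E(H)$, a disjoint copy $G_F$ of $G_{g,k-1}$; for each $F\in E(H)$ one adds the perfect matching between $G_F$ and $\nu^{-1}(F)$ joining the vertex of $G_F$ corresponding to $i\in\{1,\dots,r\}$ to the vertex $t\in\nu^{-1}(F)$ with $\lambda_F(\nu(t))=i$. No other edges are present. A proper edge-colouring gives adjacent edges distinct colours; "each cycle contains no colour exactly once" means that for every cycle $C$ and every colour $c$, the number of edges of $C$ coloured $c$ is not $1$. *)

theory Defs
  imports Complex_Main "HOL-Library.Multiset"
begin

definition simple_graph :: "'v set \<Rightarrow> 'v set set \<Rightarrow> bool" where
  "simple_graph V E \<longleftrightarrow> finite V \<and> (\<forall>e\<in>E. \<exists>x y. x \<in> V \<and> y \<in> V \<and> x \<noteq> y \<and> e = {x, y})"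

definition graph_iso :: "('v \<Rightarrow> 'w) \<Rightarrow> 'v set \<Rightarrow> 'v set set \<Rightarrow> 'w set \<Rightarrow> 'w set set \<Rightarrow> bool" where
  "graph_iso \<psi> V0 E0 V1 E1 \<longleftrightarrow> bij_betw \<psi> V0 V1 \<and>
     (\<forall>x\<in>V0. \<forall>y\<in>V0. {x, y} \<in> E0 \<longleftrightarrow> {\<psi> x, \<psi> y} \<in> E1)"

definition is_cycle :: "'v set set \<Rightarrow> (nat \<Rightarrow> 'v) \<Rightarrow> nat \<Rightarrow> bool" where
  "is_cycle E vs l \<longleftrightarrow> l \<ge> 3 \<and> inj_on vs {0..<l} \<and>
     (\<forall>i<l. {vs i, vs ((i + 1) mod l)} \<in> E)"

definition cycle_edges :: "(nat \<Rightarrow> 'v) \<Rightarrow> nat \<Rightarrow> 'v set set" where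
  "cycle_edges vs l = {{vs i, vs ((i + 1) mod l)} | i. i < l}"

definition proper_edge_colouring :: "'v set set \<Rightarrow> ('v set \<Rightarrow> 'c) \<Rightarrow> bool" where
  "proper_edge_colouring E c \<longleftrightarrow>
     (\<forall>e\<in>E. \<forall>e'\<in>E. e \<noteq> e' \<and> e \<inter> e' \<noteq> {} \<longrightarrow> c e \<noteq> c e')"

definition no_colour_once_on_cycles :: "'v set set \<Rightarrow> ('v set \<Rightarrow> 'c) \<Rightarrow> bool" where
  "no_colour_once_on_cycles E c \<longleftrightarrow>
     (\<forall>vs l. is_cycle E vs l \<longrightarrow> (\<forall>col. card {e \<in> cycle_edges vs l. c e = col} \<noteq> 1))"

definition uniform_hypergraph :: "nat \<Rightarrow> 'a set \<Rightarrow> 'a set set \<Rightarrow> bool" where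
  "uniform_hypergraph r V E \<longleftrightarrow> finite V \<and> (\<forall>F\<in>E. F \<subseteq> V \<and> card F = r)"

definition closed_walk :: "'a set set \<Rightarrow> (nat \<Rightarrow> 'a) \<Rightarrow> (nat \<Rightarrow> 'a set) \<Rightarrow> nat \<Rightarrow> bool" where
  "closed_walk E vs Fs l \<longleftrightarrow> l \<ge> 1 \<and>
     (\<forall>i<l. Fs i \<in> E \<and> vs i \<in> Fs i \<and> vs ((i + 1) mod l) \<in> Fs i
            \<and> Fs i \<noteq> Fs ((i + 1) mod l)) \<and>
     inj_on vs {1..<l}"

definition mg_connected :: "('b \<times> 'b) multiset \<Rightarrow> 'b \<Rightarrow> 'b \<Rightarrow> bool" where
  "mg_connected M a b \<longleftrightarrow> (a, b) \<in> (set_mset M \<union> (set_mset M)\<inverse>)\<^sup>*"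

definition mg_bridgeless :: "('b \<times> 'b) multiset \<Rightarrow> bool" where
  "mg_bridgeless M \<longleftrightarrow> (\<forall>e\<in>#M. mg_connected (M - {#e#}) (fst e) (snd e))"

definition walk_label_mset ::
  "('a set \<Rightarrow> 'a \<Rightarrow> nat) \<Rightarrow> (nat \<Rightarrow> 'a) \<Rightarrow> (nat \<Rightarrow> 'a set) \<Rightarrow> nat \<Rightarrow> (nat \<times> nat) multiset" where
  "walk_label_mset lab vs Fs l =
     image_mset (\<lambda>i. (lab (Fs i) (vs i), lab (Fs i) (vs ((i + 1) mod l)))) (mset_set {0..<l})"

definition tranquil_with :: "nat \<Rightarrow> 'a set \<Rightarrow> 'a set set \<Rightarrow> ('a set \<Rightarrow> 'a \<Rightarrow> nat) \<Rightarrow> bool" where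
  "tranquil_with r V E lab \<longleftrightarrow> uniform_hypergraph r V E \<and>
     (\<forall>F\<in>E. \<forall>v\<in>F. lab F v \<in> {1..r}) \<and>
     (\<forall>vs Fs l. closed_walk E vs Fs l \<longrightarrow> mg_bridgeless (walk_label_mset lab vs Fs l))"

definition hyp_colourable :: "'a set \<Rightarrow> 'a set set \<Rightarrow> nat \<Rightarrow> bool" where
  "hyp_colourable V E m \<longleftrightarrow>
     (\<exists>c. (\<forall>x\<in>V. c x < m) \<and> (\<forall>F\<in>E. \<exists>x\<in>F. \<exists>y\<in>F. c x \<noteq> c y))"

definition hyp_chromatic_ge :: "'a set \<Rightarrow> 'a set set \<Rightarrow> nat \<Rightarrow> bool" where
  "hyp_chromatic_ge V E k \<longleftrightarrow> (\<forall>m<k. \<not> hyp_colourable V E m)"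

definition berge_cycle :: "'a set set \<Rightarrow> nat \<Rightarrow> bool" where
  "berge_cycle E l \<longleftrightarrow> l \<ge> 2 \<and> (\<exists>Fs xs.
     (\<forall>i<l. Fs i \<in> E) \<and> inj_on Fs {0..<l} \<and> inj_on xs {0..<l} \<and>
     (\<forall>i<l. xs i \<in> Fs i \<inter> Fs ((i + 1) mod l)))"

definition hyp_girth_ge :: "'a set set \<Rightarrow> nat \<Rightarrow> bool" where
  "hyp_girth_ge E m \<longleftrightarrow> (\<forall>l. berge_cycle E l \<longrightarrow> l \<ge> m)"

inductive constructed :: "nat \<Rightarrow> nat \<Rightarrow> nat set \<Rightarrow> nat set set \<Rightarrow> bool" for g where
  base: "constructed g 1 {v} {}"
| step: "\<lbrakk> k \<ge> 1;
     constructed g k V0 E0;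
     r = card V0;
     bij_betw \<iota> {1..r} V0;
     tranquil_with r (VH :: nat set) EH lab;
     \<forall>F\<in>EH. bij_betw (lab F) F {1..r};
     hyp_chromatic_ge VH EH (Suc k);
     hyp_girth_ge EH (nat \<lceil>real g / 3\<rceil>);
     bij_betw \<nu> T VH;
     \<forall>F\<in>EH. simple_graph (GV F) (GE F) \<and> graph_iso (\<psi> F) V0 E0 (GV F) (GE F);
     \<forall>F\<in>EH. GV F \<inter> T = {};
     \<forall>F\<in>EH. \<forall>F'\<in>EH. F \<noteq> F' \<longrightarrow> GV F \<inter> GV F' = {};
     V = T \<union> (\<Union>F\<in>EH. GV F);
     E = (\<Union>F\<in>EH. GE F) \<union>
         {{\<psi> F (\<iota> i), t} | F i t. F \<in> EH \<and> t \<in> T \<and> \<nu> t \<in> F \<and> lab F (\<nu> t) = i} \<rbrakk>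
   \<Longrightarrow> constructed g (Suc k) V E"

end

theory Submission
  imports Defs
begin


definition chainH :: "'a set set \<Rightarrow> ('a set \<Rightarrow> 'a \<Rightarrow> nat) \<Rightarrow> (nat \<Rightarrow> nat \<Rightarrow> bool) \<Rightarrow> 'a set \<Rightarrow> nat \<Rightarrow> nat \<Rightarrow> (nat \<Rightarrow> 'a) \<Rightarrow> (nat \<Rightarrow> 'a set) \<Rightarrow> bool" where
"chainH EH lab L F x m ws hs \<longleftrightarrow> m \<ge> 1 \<and>
   (\<forall>j. Suc j < m \<longrightarrow> hs j \<in> EH \<and> ws j \<in> hs j \<and> ws (Suc j) \<in> hs j \<and> L (lab (hs j) (ws j)) (lab (hs j) (ws (Suc j)))) \<and>
   ws 0 \<in> F \<and> L x (lab F (ws 0))"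

lemma chain_prefix:
  "chainH EH lab L F x m ws hs \<Longrightarrow> 1 \<le> m' \<Longrightarrow> m' \<le> m \<Longrightarrow> chainH EH lab L F x m' ws hs"
  unfolding chainH_def by auto

lemma chain_suffix:
  assumes "chainH EH lab L F x m ws hs" "Suc j < m" "hs j = F" "\<And>i. L i i"
  shows "chainH EH lab L F (lab F (ws (Suc j))) (m - Suc j) (\<lambda>i. ws (i + Suc j)) (\<lambda>i. hs (i + Suc j))"
proof -
  have "ws (Suc j) \<in> F" using assms unfolding chainH_def by auto
  then show ?thesis using assms unfolding chainH_def
    by (auto simp: algebra_simps)
qed

lemma chain_drop:
  assumes ch: "chainH EH lab L F x m ws hs" and ad: "a + d + 1 < m"
    and s1: "ws a \<in> hs (a+d)" and s2: "L (lab (hs (a+d)) (ws a)) (lab (hs (a+d)) (ws (a+d+1)))"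
  shows "chainH EH lab L F x (m-d) (\<lambda>i. if i \<le> a then ws i else ws (i+d)) (\<lambda>i. if i < a then hs i else hs (i+d))"
proof -
  have st: "\<And>j. Suc j < m \<Longrightarrow> hs j \<in> EH \<and> ws j \<in> hs j \<and> ws (Suc j) \<in> hs j \<and> L (lab (hs j) (ws j)) (lab (hs j) (ws (Suc j)))"
    using ch unfolding chainH_def by blast
  have "(if j < a then hs j else hs (j + d)) \<in> EH \<and>
       (if j \<le> a then ws j else ws (j + d)) \<in> (if j < a then hs j else hs (j + d)) \<and>
       (if Suc j \<le> a then ws (Suc j) else ws (Suc j + d)) \<in> (if j < a then hs j else hs (j + d)) \<and>
       L (lab (if j < a then hs j else hs (j + d)) (if j \<le> a then ws j else ws (j + d)))
        (lab (if j < a then hs j else hs (j + d)) (if Suc j \<le> a then ws (Suc j) else ws (Suc j + d)))"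
    if j: "Suc j < m - d" for j
  proof -
    consider "j < a" | "j = a" | "j > a" by linarith
    then show ?thesis
    proof cases
      case 1 then show ?thesis using st[of j] ad by auto
    next
      case 2 then show ?thesis using st[of "a+d"] ad s1 s2 by auto
    next
      case 3 then show ?thesis using st[of "j+d"] j by auto
    qed
  qed
  then show ?thesis using ch ad unfolding chainH_def by auto
qed

lemma rtrancl_sub_L:
  assumes "(p, q) \<in> (S \<union> S\<inverse>)\<^sup>*" "\<And>a b. (a, b) \<in> S \<Longrightarrow> L a b"
    "\<And>i. L i i" "\<And>i j. L i j \<Longrightarrow> L j i" "\<And>i j k. L i j \<Longrightarrow> L j k \<Longrightarrow> L i k"
  shows "L p q"
  using assms(1)
proof (induction rule: rtrancl_induct)
  case base then show ?case using assms(3) by blast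
next
  case (step y z) then show ?case using assms(2,4,5) by blast
qed

lemma chain_good:
  assumes tr: "\<forall>vs Fs l. closed_walk EH vs Fs l \<longrightarrow> mg_bridgeless (walk_label_mset lab vs Fs l)"
    and refl: "\<And>i. L i i" and sym: "\<And>i j. L i j \<Longrightarrow> L j i"
    and trans: "\<And>i j k. L i j \<Longrightarrow> L j k \<Longrightarrow> L i k"
    and F: "F \<in> EH"
    and ch: "chainH EH lab L F x m ws hs" and e1: "ws (m-1) \<in> F" and e2: "L (lab F (ws (m-1))) y"
    and m2: "m \<ge> 2"
    and na: "\<forall>j. Suc j < m \<longrightarrow> hs j \<noteq> F"
    and nb: "\<forall>j. j + 2 < m \<longrightarrow> hs j \<noteq> hs (Suc j)"
    and nc: "inj_on ws {1..<m}"
  shows "L x y"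
proof -
  define Fs where "Fs = (\<lambda>i. if Suc i < m then hs i else F)"
  have st: "\<And>j. Suc j < m \<Longrightarrow> hs j \<in> EH \<and> ws j \<in> hs j \<and> ws (Suc j) \<in> hs j \<and> L (lab (hs j) (ws j)) (lab (hs j) (ws (Suc j)))"
    using ch unfolding chainH_def by blast
  have s0: "ws 0 \<in> F" "L x (lab F (ws 0))" using ch unfolding chainH_def by auto
  have cw: "closed_walk EH ws Fs m"
    unfolding closed_walk_def
  proof (intro conjI allI impI)
    show "1 \<le> m" using m2 by simp
    show "inj_on ws {1..<m}" by fact
    fix i assume i: "i < m"
    show "Fs i \<in> EH" using st[of i] F by (auto simp: Fs_def)
    show "ws i \<in> Fs i"
    proof (cases "Suc i < m")
      case True then show ?thesis using st[of i] by (auto simp: Fs_def)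
    next
      case False then have "i = m - 1" using i by simp
      then show ?thesis using e1 False by (simp add: Fs_def)
    qed
    show "ws ((i + 1) mod m) \<in> Fs i"
    proof (cases "Suc i < m")
      case True then show ?thesis using st[of i] by (auto simp: Fs_def)
    next
      case False then have "Suc i = m" using i by simp
      then show ?thesis using s0 by (auto simp: Fs_def)
    qed
    show "Fs i \<noteq> Fs ((i + 1) mod m)"
    proof (cases "Suc (Suc i) < m")
      case True then show ?thesis using nb by (auto simp: Fs_def)
    next
      case False
      then consider "Suc (Suc i) = m" | "Suc i = m" using i by linarith
      then show ?thesis
      proof cases
        case 1 then show ?thesis using na by (auto simp: Fs_def)
      next
        case 2
        have "hs 0 \<noteq> F" using na m2 by simp
        moreover have "Fs 0 = hs 0" using m2 by (simp add: Fs_def)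
        moreover have "Fs i = F" using 2 by (simp add: Fs_def)
        ultimately show ?thesis using 2 by simp
      qed
    qed
  qed
  define f where "f = (\<lambda>i. (lab (Fs i) (ws i), lab (Fs i) (ws ((i + 1) mod m))))"
  have M: "walk_label_mset lab ws Fs m = add_mset (f (m-1)) (image_mset f (mset_set {0..<m-1}))"
  proof -
    have "{0..<m} = insert (m-1) {0..<m-1}" using m2 by auto
    then show ?thesis unfolding walk_label_mset_def f_def by simp
  qed
  have "mg_bridgeless (walk_label_mset lab ws Fs m)" using tr cw by blast
  then have "mg_connected (image_mset f (mset_set {0..<m-1})) (fst (f (m-1))) (snd (f (m-1)))"
    unfolding mg_bridgeless_def M by simp
  moreover have "f (m-1) = (lab F (ws (m-1)), lab F (ws 0))"
    using m2 by (simp add: f_def Fs_def)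
  ultimately have c: "mg_connected (image_mset f (mset_set {0..<m-1})) (lab F (ws (m-1))) (lab F (ws 0))" by simp
  have "L (lab F (ws (m-1))) (lab F (ws 0))"
  proof (rule rtrancl_sub_L[OF c[unfolded mg_connected_def] _ refl sym trans])
    fix a b assume "(a, b) \<in> set_mset (image_mset f (mset_set {0..<m-1}))"
    then obtain i where "i < m - 1" "(a, b) = f i" by auto
    then show "L a b" using st[of i] by (auto simp: f_def Fs_def)
  qed
  then show ?thesis using s0 e2 sym trans by blast
qed

lemma chain_main:
  assumes tr: "\<forall>vs Fs l. closed_walk EH vs Fs l \<longrightarrow> mg_bridgeless (walk_label_mset lab vs Fs l)"
    and refl: "\<And>i. L i i" and sym: "\<And>i j. L i j \<Longrightarrow> L j i"
    and trans: "\<And>i j k. L i j \<Longrightarrow> L j k \<Longrightarrow> L i k"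
    and F: "F \<in> EH"
  shows "chainH EH lab L F x m ws hs \<Longrightarrow> ws (m-1) \<in> F \<Longrightarrow> L (lab F (ws (m-1))) y \<Longrightarrow> L x y"
proof (induction m arbitrary: x y ws hs rule: less_induct)
  case (less m)
  note ch = less.prems(1)
  have IH: "\<And>m' x y ws hs. m' < m \<Longrightarrow> chainH EH lab L F x m' ws hs \<Longrightarrow> ws (m'-1) \<in> F \<Longrightarrow> L (lab F (ws (m'-1))) y \<Longrightarrow> L x y"
    using less.IH by blast
  have m1: "m \<ge> 1" using ch unfolding chainH_def by simp
  have st: "\<And>j. Suc j < m \<Longrightarrow> hs j \<in> EH \<and> ws j \<in> hs j \<and> ws (Suc j) \<in> hs j \<and> L (lab (hs j) (ws j)) (lab (hs j) (ws (Suc j)))"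
    using ch unfolding chainH_def by blast
  have s0: "ws 0 \<in> F" "L x (lab F (ws 0))" using ch unfolding chainH_def by auto
  show ?case
  proof (cases "m = 1")
    case True then show ?thesis using s0 less.prems trans by auto
  next
    case False
    then have m2: "m \<ge> 2" using m1 by simp
    show ?thesis
    proof (cases "\<exists>j. Suc j < m \<and> hs j = F")
      case True
      then obtain j where j: "Suc j < m" "hs j = F" by blast
      have A: "L x (lab F (ws j))"
        using IH[of "Suc j" x ws hs "lab F (ws j)"] chain_prefix[OF ch, of "Suc j"] j st[of j] refl by simp
      have e: "m - Suc j - 1 + Suc j = m - 1" using j by simp
      have B: "L (lab F (ws (Suc j))) y"
        using IH[of "m - Suc j" "lab F (ws (Suc j))" "\<lambda>i. ws (i + Suc j)" "\<lambda>i. hs (i + Suc j)" y]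
          chain_suffix[OF ch j refl] j less.prems(2,3) by (simp only: e)
      show ?thesis using A B st[of j] j trans by metis
    next
      case nA: False
      show ?thesis
      proof (cases "\<exists>j. j + 2 < m \<and> hs j = hs (Suc j)")
        case True
        then obtain j where j: "j + 2 < m" "hs j = hs (Suc j)" by blast
        have c2: "chainH EH lab L F x (m-1) (\<lambda>i. if i \<le> j then ws i else ws (i+1)) (\<lambda>i. if i < j then hs i else hs (i+1))"
          apply (rule chain_drop[OF ch, of j 1])
          using j st[of j] st[of "Suc j"] trans by auto
        have e: "(if m - 1 - 1 \<le> j then ws (m - 1 - 1) else ws (m - 1 - 1 + 1)) = ws (m - 1)"
          using j by (auto simp: Suc_diff_Suc)
        show ?thesis using IH[OF _ c2] e less.prems(2,3) m2 by simp
      next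
        case nB: False
        show ?thesis
        proof (cases "inj_on ws {1..<m}")
          case True
          show ?thesis
            by (rule chain_good[OF tr refl sym trans F ch less.prems(2,3) m2]) (use nA nB True in auto)
        next
          case False
          then obtain a b where ab: "a < b" "1 \<le> a" "b < m" "ws a = ws b"
            unfolding inj_on_def by (metis atLeastLessThan_iff linorder_neq_iff)
          show ?thesis
          proof (cases "b = m - 1")
            case True
            show ?thesis
              using IH[of "Suc a" x ws hs y] chain_prefix[OF ch, of "Suc a"] ab True less.prems(2,3) by simp
          next
            case False
            then have b1: "Suc b < m" using ab by simp
            have c2: "chainH EH lab L F x (m-(b-a)) (\<lambda>i. if i \<le> a then ws i else ws (i+(b-a))) (\<lambda>i. if i < a then hs i else hs (i+(b-a)))"
              apply (rule chain_drop[OF ch, of a "b-a"])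
              using ab b1 st[of b] by auto
            have e: "(if m - (b-a) - 1 \<le> a then ws (m - (b-a) - 1) else ws (m - (b-a) - 1 + (b-a))) = ws (m - 1)"
              using ab b1 by auto
            show ?thesis using IH[OF _ c2] e less.prems(2,3) ab by simp
          qed
        qed
      qed
    qed
  qed
qed

lemma chain_extend:
  assumes ch: "chainH EH lab L F x m ws hs" and G: "G \<in> EH" and a: "ws (m-1) \<in> G" and v: "v \<in> G"
    and l: "L (lab G (ws (m-1))) (lab G v)"
  shows "chainH EH lab L F x (Suc m) (ws(m := v)) (hs(m-1 := G))"
proof -
  have m1: "m \<ge> 1" using ch unfolding chainH_def by simp
  have st: "\<And>j. Suc j < m \<Longrightarrow> hs j \<in> EH \<and> ws j \<in> hs j \<and> ws (Suc j) \<in> hs j \<and> L (lab (hs j) (ws j)) (lab (hs j) (ws (Suc j)))"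
    using ch unfolding chainH_def by blast
  have "(hs(m-1 := G)) j \<in> EH \<and> (ws(m := v)) j \<in> (hs(m-1 := G)) j \<and> (ws(m := v)) (Suc j) \<in> (hs(m-1 := G)) j \<and>
     L (lab ((hs(m-1 := G)) j) ((ws(m := v)) j)) (lab ((hs(m-1 := G)) j) ((ws(m := v)) (Suc j)))"
    if j: "Suc j < Suc m" for j
  proof (cases "Suc j < m")
    case True then show ?thesis using st[of j] by auto
  next
    case False then have "j = m - 1" using j m1 by simp
    then show ?thesis using G a v l m1 by auto
  qed
  then show ?thesis using ch m1 unfolding chainH_def by auto
qed




definition Sg :: "'v set set \<Rightarrow> ('v set \<Rightarrow> 'c) \<Rightarrow> 'c \<Rightarrow> ('v \<times> 'v) set" where
  "Sg E c k = {(p, q). {p, q} \<in> E \<and> c {p, q} \<noteq> k}"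

definition Qprop :: "'v set set \<Rightarrow> ('v set \<Rightarrow> 'c) \<Rightarrow> bool" where
  "Qprop E c \<longleftrightarrow> (\<forall>u v. {u, v} \<in> E \<longrightarrow> (u, v) \<notin> (Sg E c (c {u, v}))\<^sup>*)"

lemma Sg_sym: "(u, v) \<in> (Sg E c k)\<^sup>* \<Longrightarrow> (v, u) \<in> (Sg E c k)\<^sup>*"
proof -
  have "sym (Sg E c k)" unfolding sym_def Sg_def by (auto simp: insert_commute)
  then have "sym ((Sg E c k)\<^sup>*)" by (rule sym_rtrancl)
  then show "(u, v) \<in> (Sg E c k)\<^sup>* \<Longrightarrow> (v, u) \<in> (Sg E c k)\<^sup>*" unfolding sym_def by blast
qed

lemma mod_shift_ne:
  fixes i n l :: nat
  assumes "i < l" "0 < n" "n < l"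
  shows "(i + n) mod l \<noteq> i"
proof
  assume h: "(i + n) mod l = i"
  then have "(i + n) mod l = i mod l" using assms by simp
  then have "l dvd (i + n) - i" using mod_eq_dvd_iff_nat[of i "i+n" l] by simp
  then have "l dvd n" by simp
  then show False using assms by (simp add: nat_dvd_not_less)
qed

lemma cyc_edge_ne:
  assumes l3: "(l::nat) \<ge> 3" and inj: "inj_on vs {0..<l}" and i: "i < l" and j: "j < l" and ij: "j \<noteq> i"
  shows "{vs j, vs ((j + 1) mod l)} \<noteq> {vs i, vs ((i + 1) mod l)}"
proof
  assume eq: "{vs j, vs ((j + 1) mod l)} = {vs i, vs ((i + 1) mod l)}"
  have l0: "l > 0" using l3 by simp
  have m1: "(j + 1) mod l < l" "(i + 1) mod l < l" using l0 by auto
  have "vs j = vs i \<or> vs j = vs ((i + 1) mod l)" using eq by (auto simp: doubleton_eq_iff)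
  moreover have "vs j \<noteq> vs i" using inj i j ij by (auto simp: inj_on_def)
  ultimately have a: "vs j = vs ((i + 1) mod l)" "vs ((j + 1) mod l) = vs i" using eq by (auto simp: doubleton_eq_iff)
  then have "j = (i + 1) mod l" "(j + 1) mod l = i" using inj i j m1 by (auto simp: inj_on_def)
  then have "(i + 2) mod l = i" by (simp add: mod_Suc_eq)
  then show False using mod_shift_ne[of i l 2] i l3 by simp
qed

lemma Q_imp_nco:
  assumes Q: "Qprop E c"
  shows "no_colour_once_on_cycles E c"
  unfolding no_colour_once_on_cycles_def
proof (intro allI impI notI)
  fix vs l col
  assume cyc: "is_cycle E vs l" and card: "card {e \<in> cycle_edges vs l. c e = col} = 1"
  have l3: "l \<ge> 3" and inj: "inj_on vs {0..<l}" and ed: "\<And>i. i < l \<Longrightarrow> {vs i, vs ((i + 1) mod l)} \<in> E"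
    using cyc unfolding is_cycle_def by auto
  obtain e where es: "{e \<in> cycle_edges vs l. c e = col} = {e}" using card card_1_singletonE by blast
  then have "e \<in> cycle_edges vs l" "c e = col" by auto
  then obtain i where i: "i < l" "e = {vs i, vs ((i + 1) mod l)}" unfolding cycle_edges_def by auto
  have other: "c {vs j, vs ((j + 1) mod l)} \<noteq> col" if j: "j < l" "j \<noteq> i" for j
  proof
    assume "c {vs j, vs ((j + 1) mod l)} = col"
    then have "{vs j, vs ((j + 1) mod l)} \<in> {e \<in> cycle_edges vs l. c e = col}"
      using j unfolding cycle_edges_def by auto
    then show False using es i cyc_edge_ne[OF l3 inj i(1) j(1) j(2)] by auto
  qed
  have path: "(vs ((i + 1) mod l), vs ((i + 1 + k) mod l)) \<in> (Sg E c col)\<^sup>*" if "k \<le> l - 1" for k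
    using that
  proof (induction k)
    case 0 then show ?case by simp
  next
    case (Suc k)
    define j where "j = (i + 1 + k) mod l"
    have jl: "j < l" using l3 by (simp add: j_def)
    have "j \<noteq> i" unfolding j_def using mod_shift_ne[of i l "Suc k"] i Suc.prems by simp
    then have "(vs j, vs ((j + 1) mod l)) \<in> Sg E c col"
      using ed[OF jl] other[OF jl] unfolding Sg_def by auto
    moreover have "(j + 1) mod l = (i + 1 + Suc k) mod l" unfolding j_def by (simp add: mod_Suc_eq)
    ultimately show ?case using Suc by (auto simp: j_def intro: rtrancl_into_rtrancl)
  qed
  have "(i + 1 + (l - 1)) mod l = i" using i l3 by simp
  then have p: "(vs ((i + 1) mod l), vs i) \<in> (Sg E c col)\<^sup>*" using path[of "l - 1"] by simp
  have "{vs ((i + 1) mod l), vs i} \<in> E" "c {vs ((i + 1) mod l), vs i} = col"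
    using ed[OF i(1)] \<open>c e = col\<close> i by (auto simp: insert_commute)
  then show False using Q p unfolding Qprop_def by auto
qed




locale step_ctx =
  fixes V0 :: "nat set" and E0 :: "nat set set" and c0 :: "nat set \<Rightarrow> nat" and r :: nat
    and \<iota> :: "nat \<Rightarrow> nat" and VH :: "nat set" and EH :: "nat set set" and lab :: "nat set \<Rightarrow> nat \<Rightarrow> nat"
    and \<nu> :: "nat \<Rightarrow> nat" and T :: "nat set" and GV :: "nat set \<Rightarrow> nat set" and GE :: "nat set \<Rightarrow> nat set set"
    and \<psi> :: "nat set \<Rightarrow> nat \<Rightarrow> nat" and E :: "nat set set" and idx :: "nat set \<Rightarrow> nat"
  assumes iota: "bij_betw \<iota> {1..r} V0"
    and tranq: "tranquil_with r VH EH lab"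
    and labbij: "\<forall>F\<in>EH. bij_betw (lab F) F {1..r}"
    and nu: "bij_betw \<nu> T VH"
    and G: "\<forall>F\<in>EH. simple_graph (GV F) (GE F) \<and> graph_iso (\<psi> F) V0 E0 (GV F) (GE F)"
    and disjT: "\<forall>F\<in>EH. GV F \<inter> T = {}"
    and disj: "\<forall>F\<in>EH. \<forall>F'\<in>EH. F \<noteq> F' \<longrightarrow> GV F \<inter> GV F' = {}"
    and Edef: "E = (\<Union>F\<in>EH. GE F) \<union>
         {{\<psi> F (\<iota> i), t} | F i t. F \<in> EH \<and> t \<in> T \<and> \<nu> t \<in> F \<and> lab F (\<nu> t) = i}"
    and idx: "inj_on idx EH"
    and P0: "proper_edge_colouring E0 c0" and Q0: "Qprop E0 c0"
begin

lemma psi_in: "F \<in> EH \<Longrightarrow> x \<in> V0 \<Longrightarrow> \<psi> F x \<in> GV F"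
  using G unfolding graph_iso_def by (meson bij_betw_apply)

lemma psi_inj1: "F \<in> EH \<Longrightarrow> x \<in> V0 \<Longrightarrow> y \<in> V0 \<Longrightarrow> \<psi> F x = \<psi> F y \<Longrightarrow> x = y"
  using G unfolding graph_iso_def bij_betw_def inj_on_def by blast

lemma GV_same: "F \<in> EH \<Longrightarrow> F' \<in> EH \<Longrightarrow> p \<in> GV F \<Longrightarrow> p \<in> GV F' \<Longrightarrow> F = F'"
  using disj by blast

lemma psi_inj: "F \<in> EH \<Longrightarrow> F' \<in> EH \<Longrightarrow> x \<in> V0 \<Longrightarrow> y \<in> V0 \<Longrightarrow> \<psi> F x = \<psi> F' y \<Longrightarrow> F = F' \<and> x = y"
  using GV_same psi_in psi_inj1 by metis

lemma psi_notT: "F \<in> EH \<Longrightarrow> x \<in> V0 \<Longrightarrow> \<psi> F x \<notin> T"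
  using psi_in disjT by blast

lemma GV_notT: "F \<in> EH \<Longrightarrow> p \<in> GV F \<Longrightarrow> p \<notin> T"
  using disjT by blast

lemma lab_range: "F \<in> EH \<Longrightarrow> v \<in> F \<Longrightarrow> lab F v \<in> {1..r}"
  using labbij by (meson bij_betw_apply)

lemma lab_in: "F \<in> EH \<Longrightarrow> v \<in> F \<Longrightarrow> \<iota> (lab F v) \<in> V0"
  using lab_range iota by (meson bij_betw_apply)

lemma iota_inj: "i \<in> {1..r} \<Longrightarrow> j \<in> {1..r} \<Longrightarrow> \<iota> i = \<iota> j \<Longrightarrow> i = j"
  using iota unfolding bij_betw_def inj_on_def by blast

lemma lab_inj: "F \<in> EH \<Longrightarrow> v \<in> F \<Longrightarrow> w \<in> F \<Longrightarrow> lab F v = lab F w \<Longrightarrow> v = w"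
  using labbij unfolding bij_betw_def inj_on_def by blast

lemma nu_inj: "t \<in> T \<Longrightarrow> t' \<in> T \<Longrightarrow> \<nu> t = \<nu> t' \<Longrightarrow> t = t'"
  using nu unfolding bij_betw_def inj_on_def by blast

lemma w_inj: "F \<in> EH \<Longrightarrow> t \<in> T \<Longrightarrow> t' \<in> T \<Longrightarrow> \<nu> t \<in> F \<Longrightarrow> \<nu> t' \<in> F \<Longrightarrow>
   \<iota> (lab F (\<nu> t)) = \<iota> (lab F (\<nu> t')) \<Longrightarrow> t = t'"
  using iota_inj lab_range lab_inj nu_inj by metis

lemma GE_2:
  assumes "F \<in> EH" "e \<in> GE F"
  obtains p q where "p \<in> GV F" "q \<in> GV F" "p \<noteq> q" "e = {p, q}"
proof -
  have "simple_graph (GV F) (GE F)" using G assms(1) by blast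
  then have "\<exists>x y. x \<in> GV F \<and> y \<in> GV F \<and> x \<noteq> y \<and> e = {x, y}"
    unfolding simple_graph_def using assms(2) by auto
  then show ?thesis using that by blast
qed

lemma GE_sub: "F \<in> EH \<Longrightarrow> e \<in> GE F \<Longrightarrow> e \<subseteq> GV F \<and> e \<noteq> {}"
  by (erule GE_2) auto

lemma GE_form:
  assumes F: "F \<in> EH" and e: "e \<in> GE F"
  shows "\<exists>x\<in>V0. \<exists>y\<in>V0. x \<noteq> y \<and> {x, y} \<in> E0 \<and> e = {\<psi> F x, \<psi> F y}"
proof -
  obtain p q where pq: "p \<in> GV F" "q \<in> GV F" "p \<noteq> q" "e = {p, q}"
    using GE_2[OF F e] by blast
  have bij: "bij_betw (\<psi> F) V0 (GV F)" and iso: "\<forall>x\<in>V0. \<forall>y\<in>V0. {x, y} \<in> E0 \<longleftrightarrow> {\<psi> F x, \<psi> F y} \<in> GE F"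
    using G F unfolding graph_iso_def by auto
  obtain x where x: "x \<in> V0" "p = \<psi> F x" using bij pq unfolding bij_betw_def by blast
  obtain y where y: "y \<in> V0" "q = \<psi> F y" using bij pq unfolding bij_betw_def by blast
  have "x \<noteq> y" using x y pq by blast
  moreover have "{x, y} \<in> E0" using iso x y pq e by blast
  ultimately show ?thesis using x y pq by blast
qed

lemma GE_intro: "F \<in> EH \<Longrightarrow> x \<in> V0 \<Longrightarrow> y \<in> V0 \<Longrightarrow> {x, y} \<in> E0 \<Longrightarrow> {\<psi> F x, \<psi> F y} \<in> GE F"
proof -
  assume a: "F \<in> EH" "x \<in> V0" "y \<in> V0" "{x, y} \<in> E0"
  then have "graph_iso (\<psi> F) V0 E0 (GV F) (GE F)" using G by blast
  then show ?thesis using a unfolding graph_iso_def by blast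
qed

lemma E_cases:
  assumes "e \<in> E"
  shows "(\<exists>F\<in>EH. \<exists>x\<in>V0. \<exists>y\<in>V0. x \<noteq> y \<and> {x, y} \<in> E0 \<and> e = {\<psi> F x, \<psi> F y}) \<or>
         (\<exists>F\<in>EH. \<exists>t\<in>T. \<nu> t \<in> F \<and> e = {\<psi> F (\<iota> (lab F (\<nu> t))), t})"
proof -
  have "e \<in> (\<Union>F\<in>EH. GE F) \<or> e \<in> {{\<psi> F (\<iota> i), t} | F i t. F \<in> EH \<and> t \<in> T \<and> \<nu> t \<in> F \<and> lab F (\<nu> t) = i}"
    using assms unfolding Edef by (simp only: Un_iff)
  then show ?thesis
  proof
    assume "e \<in> (\<Union>F\<in>EH. GE F)"
    then obtain F where "F \<in> EH" "e \<in> GE F" by (rule UN_E)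
    then have "\<exists>x\<in>V0. \<exists>y\<in>V0. x \<noteq> y \<and> {x, y} \<in> E0 \<and> e = {\<psi> F x, \<psi> F y}" by (rule GE_form)
    then show ?thesis using \<open>F \<in> EH\<close> by (intro disjI1 bexI[of _ F])
  next
    assume "e \<in> {{\<psi> F (\<iota> i), t} | F i t. F \<in> EH \<and> t \<in> T \<and> \<nu> t \<in> F \<and> lab F (\<nu> t) = i}"
    then have "\<exists>F i t. e = {\<psi> F (\<iota> i), t} \<and> F \<in> EH \<and> t \<in> T \<and> \<nu> t \<in> F \<and> lab F (\<nu> t) = i"
      unfolding mem_Collect_eq .
    then obtain F i t where h: "e = {\<psi> F (\<iota> i), t}" "F \<in> EH" "t \<in> T" "\<nu> t \<in> F" "lab F (\<nu> t) = i"
      by (elim exE conjE)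
    then have "\<exists>t\<in>T. \<nu> t \<in> F \<and> e = {\<psi> F (\<iota> (lab F (\<nu> t))), t}" by (intro bexI[of _ t]) simp_all
    then show ?thesis using h(2) by (intro disjI2 bexI[of _ F])
  qed
qed

lemma mt_notGE: "F \<in> EH \<Longrightarrow> t \<in> T \<Longrightarrow> F' \<in> EH \<Longrightarrow> {\<psi> F (\<iota> (lab F (\<nu> t))), t} \<notin> GE F'"
proof
  assume "F \<in> EH" "t \<in> T" "F' \<in> EH" "{\<psi> F (\<iota> (lab F (\<nu> t))), t} \<in> GE F'"
  then have "t \<in> GV F'" using GE_sub by blast
  then show False using GV_notT \<open>F' \<in> EH\<close> \<open>t \<in> T\<close> by blast
qed

definition col :: "nat set \<Rightarrow> nat" where
  "col e = (if \<exists>F\<in>EH. e \<in> GE F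
     then 2 * c0 (inv_into V0 (\<psi> (SOME F. F \<in> EH \<and> e \<in> GE F)) ` e)
     else Suc (2 * idx (SOME F. F \<in> EH \<and> e \<inter> GV F \<noteq> {})))"

lemma col_GE:
  assumes F: "F \<in> EH" and xy: "x \<in> V0" "y \<in> V0" "{x, y} \<in> E0"
  shows "col {\<psi> F x, \<psi> F y} = 2 * c0 {x, y}"
proof -
  let ?e = "{\<psi> F x, \<psi> F y}"
  have eF: "?e \<in> GE F" using GE_intro F xy by blast
  have some: "(SOME F'. F' \<in> EH \<and> ?e \<in> GE F') = F"
  proof (rule some_equality)
    show "F \<in> EH \<and> ?e \<in> GE F" using F eF by blast
    fix F' assume "F' \<in> EH \<and> ?e \<in> GE F'"
    then have "\<psi> F x \<in> GV F'" "F' \<in> EH" using GE_sub by blast+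
    then show "F' = F" using GV_same psi_in F xy by metis
  qed
  have inj: "inj_on (\<psi> F) V0" using G F unfolding graph_iso_def bij_betw_def by blast
  have "inv_into V0 (\<psi> F) ` ?e = {x, y}" using inv_into_f_f[OF inj] xy by simp
  then show ?thesis unfolding col_def using F eF some by auto
qed

lemma col_mt:
  assumes F: "F \<in> EH" and t: "t \<in> T" "\<nu> t \<in> F"
  shows "col {\<psi> F (\<iota> (lab F (\<nu> t))), t} = Suc (2 * idx F)"
proof -
  let ?w = "\<psi> F (\<iota> (lab F (\<nu> t)))"
  have wF: "?w \<in> GV F" using psi_in lab_in F t by blast
  have some: "(SOME F'. F' \<in> EH \<and> {?w, t} \<inter> GV F' \<noteq> {}) = F"
  proof (rule some_equality)
    show "F \<in> EH \<and> {?w, t} \<inter> GV F \<noteq> {}" using F wF by blast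
    fix F' assume h: "F' \<in> EH \<and> {?w, t} \<inter> GV F' \<noteq> {}"
    then have "?w \<in> GV F'" using GV_notT t by blast
    then show "F' = F" using GV_same h F wF by blast
  qed
  show ?thesis unfolding col_def using mt_notGE F t some by auto
qed

lemma mt_inE: "F \<in> EH \<Longrightarrow> t \<in> T \<Longrightarrow> \<nu> t \<in> F \<Longrightarrow> {\<psi> F (\<iota> (lab F (\<nu> t))), t} \<in> E"
  unfolding Edef by (rule UnI2) blast

lemma GE_inE: "F \<in> EH \<Longrightarrow> x \<in> V0 \<Longrightarrow> y \<in> V0 \<Longrightarrow> {x, y} \<in> E0 \<Longrightarrow> {\<psi> F x, \<psi> F y} \<in> E"
  unfolding Edef by (rule UnI1) (use GE_intro in blast)


lemma proper_col: "proper_edge_colouring E col"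
  unfolding proper_edge_colouring_def
proof (intro ballI impI)
  fix e e' assume e: "e \<in> E" and e': "e' \<in> E" and ne: "e \<noteq> e' \<and> e \<inter> e' \<noteq> {}"
  then obtain p where p: "p \<in> e" "p \<in> e'" by blast
  from E_cases[OF e] show "col e \<noteq> col e'"
  proof
    assume "\<exists>F\<in>EH. \<exists>x\<in>V0. \<exists>y\<in>V0. x \<noteq> y \<and> {x, y} \<in> E0 \<and> e = {\<psi> F x, \<psi> F y}"
    then obtain F x y where A: "F \<in> EH" "x \<in> V0" "y \<in> V0" "{x, y} \<in> E0" "e = {\<psi> F x, \<psi> F y}" by blast
    have ce: "col e = 2 * c0 {x, y}" using col_GE A by simp
    from E_cases[OF e'] show ?thesis
    proof
      assume "\<exists>F\<in>EH. \<exists>x\<in>V0. \<exists>y\<in>V0. x \<noteq> y \<and> {x, y} \<in> E0 \<and> e' = {\<psi> F x, \<psi> F y}"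
      then obtain F' x' y' where A': "F' \<in> EH" "x' \<in> V0" "y' \<in> V0" "{x', y'} \<in> E0" "e' = {\<psi> F' x', \<psi> F' y'}" by blast
      have ce': "col e' = 2 * c0 {x', y'}" using col_GE A' by simp
      obtain a where a: "a \<in> {x, y}" "p = \<psi> F a" using p A by blast
      obtain b where b: "b \<in> {x', y'}" "p = \<psi> F' b" using p A' by blast
      have aV: "a \<in> V0" using a(1) A(2,3) by blast
      have bV: "b \<in> V0" using b(1) A'(2,3) by blast
      have "F = F' \<and> a = b" by (rule psi_inj[OF A(1) A'(1) aV bV]) (use a b in simp)
      then have "F = F'" "a = b" by simp_all
      have "{x, y} \<noteq> {x', y'}"
      proof
        assume eq: "{x, y} = {x', y'}"
        have "e = \<psi> F ` {x, y}" "e' = \<psi> F' ` {x', y'}" using A A' by simp_all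
        then have "e = e'" using eq \<open>F = F'\<close> by simp
        then show False using ne by blast
      qed
      moreover have "{x, y} \<inter> {x', y'} \<noteq> {}" using a(1) b(1) \<open>a = b\<close> by blast
      moreover have "\<forall>e\<in>E0. \<forall>e'\<in>E0. e \<noteq> e' \<and> e \<inter> e' \<noteq> {} \<longrightarrow> c0 e \<noteq> c0 e'"
        using P0 unfolding proper_edge_colouring_def .
      ultimately have "c0 {x, y} \<noteq> c0 {x', y'}" using A(4) A'(4) by (meson conjI)
      then show ?thesis using ce ce' by simp
    next
      assume "\<exists>F\<in>EH. \<exists>t\<in>T. \<nu> t \<in> F \<and> e' = {\<psi> F (\<iota> (lab F (\<nu> t))), t}"
      then obtain F' t where B: "F' \<in> EH" "t \<in> T" "\<nu> t \<in> F'" "e' = {\<psi> F' (\<iota> (lab F' (\<nu> t))), t}" by blast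
      have "col e' = Suc (2 * idx F')" using col_mt B by simp
      then show ?thesis using ce by presburger
    qed
  next
    assume "\<exists>F\<in>EH. \<exists>t\<in>T. \<nu> t \<in> F \<and> e = {\<psi> F (\<iota> (lab F (\<nu> t))), t}"
    then obtain F t where B: "F \<in> EH" "t \<in> T" "\<nu> t \<in> F" "e = {\<psi> F (\<iota> (lab F (\<nu> t))), t}" by blast
    have ce: "col e = Suc (2 * idx F)" using col_mt B by simp
    from E_cases[OF e'] show ?thesis
    proof
      assume "\<exists>F\<in>EH. \<exists>x\<in>V0. \<exists>y\<in>V0. x \<noteq> y \<and> {x, y} \<in> E0 \<and> e' = {\<psi> F x, \<psi> F y}"
      then obtain F' x y where A: "F' \<in> EH" "x \<in> V0" "y \<in> V0" "{x, y} \<in> E0" "e' = {\<psi> F' x, \<psi> F' y}" by blast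
      have "col e' = 2 * c0 {x, y}" using col_GE A by simp
      then show ?thesis using ce by presburger
    next
      assume "\<exists>F\<in>EH. \<exists>t\<in>T. \<nu> t \<in> F \<and> e' = {\<psi> F (\<iota> (lab F (\<nu> t))), t}"
      then obtain F' t' where B': "F' \<in> EH" "t' \<in> T" "\<nu> t' \<in> F'" "e' = {\<psi> F' (\<iota> (lab F' (\<nu> t'))), t'}" by blast
      have ce': "col e' = Suc (2 * idx F')" using col_mt B' by simp
      show ?thesis
      proof (cases "F = F'")
        case False
        then have "idx F \<noteq> idx F'" using idx B B' unfolding inj_on_def by blast
        then show ?thesis using ce ce' by simp
      next
        case True
        have w1: "\<psi> F (\<iota> (lab F (\<nu> t))) \<notin> T" using psi_notT lab_in B by blast
        have w2: "\<psi> F' (\<iota> (lab F' (\<nu> t'))) \<notin> T" using psi_notT lab_in B' by blast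
        have "t = t'"
        proof -
          consider "p = t" "p = t'" | "p = t" "p = \<psi> F' (\<iota> (lab F' (\<nu> t')))"
            | "p = \<psi> F (\<iota> (lab F (\<nu> t)))" "p = t'"
            | "p = \<psi> F (\<iota> (lab F (\<nu> t)))" "p = \<psi> F' (\<iota> (lab F' (\<nu> t')))"
            using p B B' by blast
          then show ?thesis
          proof cases
            case 1 then show ?thesis by simp
          next
            case 2 then show ?thesis using w2 B by simp
          next
            case 3 then show ?thesis using w1 B' by simp
          next
            case 4
            have "\<iota> (lab F (\<nu> t)) = \<iota> (lab F (\<nu> t'))"
              by (rule psi_inj1[of F]) (use 4 lab_in B B' True in auto)
            then show ?thesis by (rule w_inj[rotated -1]) (use B B' True in auto)
          qed
        qed
        then have "e = e'" using B B' True by simp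
        then show ?thesis using ne by blast
      qed
    qed
  qed
qed


end




context step_ctx begin

definition Rk :: "nat \<Rightarrow> (nat \<times> nat) set" where "Rk k = (Sg E0 c0 k)\<^sup>*"
definition Lk :: "nat \<Rightarrow> nat \<Rightarrow> nat \<Rightarrow> bool" where "Lk k i j \<longleftrightarrow> (\<iota> i, \<iota> j) \<in> Rk k"
definition xl :: "nat \<Rightarrow> nat" where "xl x0 = inv_into {1..r} \<iota> x0"

lemma iota_xl: "x0 \<in> V0 \<Longrightarrow> \<iota> (xl x0) = x0"
  unfolding xl_def using iota by (metis bij_betw_def f_inv_into_f)

definition InvT :: "nat \<Rightarrow> nat set \<Rightarrow> nat \<Rightarrow> nat \<Rightarrow> bool" where
  "InvT k F x0 z \<longleftrightarrow> (\<exists>m ws hs. chainH EH lab (Lk k) F (xl x0) m ws hs \<and> ws (m-1) = \<nu> z)"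

definition InvG :: "nat \<Rightarrow> nat set \<Rightarrow> nat \<Rightarrow> nat set \<Rightarrow> nat \<Rightarrow> bool" where
  "InvG k F x0 F' y \<longleftrightarrow> (F' = F \<and> (x0, y) \<in> Rk k) \<or>
     (\<exists>m ws hs. chainH EH lab (Lk k) F (xl x0) m ws hs \<and> ws (m-1) \<in> F' \<and> (\<iota> (lab F' (ws (m-1))), y) \<in> Rk k)"

definition Inv :: "nat \<Rightarrow> nat set \<Rightarrow> nat \<Rightarrow> nat \<Rightarrow> bool" where
  "Inv k F x0 z \<longleftrightarrow> (z \<in> T \<and> InvT k F x0 z) \<or> (\<exists>F'\<in>EH. \<exists>y\<in>V0. z = \<psi> F' y \<and> InvG k F x0 F' y)"

lemma S1: "InvG k F x0 F' y \<Longrightarrow> (y, y') \<in> Sg E0 c0 k \<Longrightarrow> InvG k F x0 F' y'"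
  unfolding InvG_def Rk_def by (meson rtrancl_into_rtrancl)

lemma S2: "InvT k F x0 z \<Longrightarrow> \<nu> z \<in> F'' \<Longrightarrow> InvG k F x0 F'' (\<iota> (lab F'' (\<nu> z)))"
proof -
  assume a: "InvT k F x0 z" "\<nu> z \<in> F''"
  then obtain m ws hs where h: "chainH EH lab (Lk k) F (xl x0) m ws hs" "ws (m-1) = \<nu> z" unfolding InvT_def by blast
  have "(\<iota> (lab F'' (ws (m-1))), \<iota> (lab F'' (\<nu> z))) \<in> Rk k" unfolding Rk_def using h(2) by simp
  then show ?thesis unfolding InvG_def using h a(2) by metis
qed

lemma S3:
  assumes "InvG k F x0 F'' (\<iota> (lab F'' (\<nu> t)))" "F'' \<in> EH" "\<nu> t \<in> F''" "x0 \<in> V0"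
  shows "InvT k F x0 t"
  using assms(1) unfolding InvG_def
proof
  assume h: "F'' = F \<and> (x0, \<iota> (lab F'' (\<nu> t))) \<in> Rk k"
  have "chainH EH lab (Lk k) F (xl x0) 1 (\<lambda>_. \<nu> t) (\<lambda>_. F)"
    unfolding chainH_def Lk_def using h assms iota_xl by auto
  then show ?thesis unfolding InvT_def by fastforce
next
  assume "\<exists>m ws hs. chainH EH lab (Lk k) F (xl x0) m ws hs \<and> ws (m-1) \<in> F'' \<and> (\<iota> (lab F'' (ws (m-1))), \<iota> (lab F'' (\<nu> t))) \<in> Rk k"
  then obtain m ws hs where h: "chainH EH lab (Lk k) F (xl x0) m ws hs" "ws (m-1) \<in> F''"
    "(\<iota> (lab F'' (ws (m-1))), \<iota> (lab F'' (\<nu> t))) \<in> Rk k" by blast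
  have "chainH EH lab (Lk k) F (xl x0) (Suc m) (ws(m := \<nu> t)) (hs(m-1 := F''))"
    by (rule chain_extend[OF h(1) assms(2) h(2) assms(3)]) (use h(3) in \<open>simp add: Lk_def\<close>)
  then show ?thesis unfolding InvT_def by (metis diff_Suc_1 fun_upd_same)
qed

lemma walk_inv:
  assumes F: "F \<in> EH" and x0: "x0 \<in> V0" and w: "(\<psi> F x0, z) \<in> (Sg E col (2 * k))\<^sup>*"
  shows "Inv k F x0 z"
  using w
proof (induction rule: rtrancl_induct)
  case base
  have "InvG k F x0 F x0" unfolding InvG_def Rk_def by simp
  then show ?case unfolding Inv_def using F x0 by blast
next
  case (step z z')
  have zE: "{z, z'} \<in> E" and zc: "col {z, z'} \<noteq> 2 * k" using step.hyps(2) unfolding Sg_def by auto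
  from E_cases[OF zE] show ?case
  proof
    assume "\<exists>F\<in>EH. \<exists>x\<in>V0. \<exists>y\<in>V0. x \<noteq> y \<and> {x, y} \<in> E0 \<and> {z, z'} = {\<psi> F x, \<psi> F y}"
    then obtain F'' a b where A: "F'' \<in> EH" "a \<in> V0" "b \<in> V0" "{a, b} \<in> E0" "{z, z'} = {\<psi> F'' a, \<psi> F'' b}" by blast
    have "col {z, z'} = 2 * c0 {a, b}" using A col_GE by simp
    then have "c0 {a, b} \<noteq> k" using zc by simp
    then have ab: "(a, b) \<in> Sg E0 c0 k" "(b, a) \<in> Sg E0 c0 k" using A(4) unfolding Sg_def by (auto simp: insert_commute)
    have sub: "Inv k F x0 z'" if h: "z = \<psi> F'' a'" "z' = \<psi> F'' b'" "(a', b') \<in> Sg E0 c0 k" "a' \<in> V0" "b' \<in> V0" for a' b'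
    proof -
      have "z \<notin> T" using psi_notT A(1) h by simp
      then obtain F' y where y: "F' \<in> EH" "y \<in> V0" "z = \<psi> F' y" "InvG k F x0 F' y" using step.IH unfolding Inv_def by blast
      have "F' = F'' \<and> y = a'" by (rule psi_inj[OF y(1) A(1) y(2) h(4)]) (use y h in simp)
      then have "InvG k F x0 F'' b'" using S1 y(4) h(3) by blast
      then show ?thesis unfolding Inv_def using A(1) h by blast
    qed
    have "(z = \<psi> F'' a \<and> z' = \<psi> F'' b) \<or> (z = \<psi> F'' b \<and> z' = \<psi> F'' a)" using A(5) by (simp add: doubleton_eq_iff)
    then show ?thesis using sub ab A by blast
  next
    assume "\<exists>F\<in>EH. \<exists>t\<in>T. \<nu> t \<in> F \<and> {z, z'} = {\<psi> F (\<iota> (lab F (\<nu> t))), t}"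
    then obtain F'' t where B: "F'' \<in> EH" "t \<in> T" "\<nu> t \<in> F''" "{z, z'} = {\<psi> F'' (\<iota> (lab F'' (\<nu> t))), t}" by blast
    let ?w = "\<psi> F'' (\<iota> (lab F'' (\<nu> t)))"
    have wV: "\<iota> (lab F'' (\<nu> t)) \<in> V0" using lab_in B by blast
    have wT: "?w \<notin> T" using psi_notT B(1) wV by blast
    have "(z = ?w \<and> z' = t) \<or> (z = t \<and> z' = ?w)" using B(4) by (simp add: doubleton_eq_iff)
    then show ?thesis
    proof
      assume h: "z = ?w \<and> z' = t"
      then obtain F' y where y: "F' \<in> EH" "y \<in> V0" "z = \<psi> F' y" "InvG k F x0 F' y"
        using step.IH wT unfolding Inv_def by blast
      have "F' = F'' \<and> y = \<iota> (lab F'' (\<nu> t))" by (rule psi_inj[OF y(1) B(1) y(2) wV]) (use y h in simp)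
      then have "InvT k F x0 t" using S3[of k F x0 F'' t] y(4) B x0 by blast
      then show ?thesis unfolding Inv_def using h B by blast
    next
      assume h: "z = t \<and> z' = ?w"
      have "\<not> (\<exists>F'\<in>EH. \<exists>y\<in>V0. z = \<psi> F' y)" using psi_notT h B(2) by blast
      then have "InvT k F x0 t" using step.IH h unfolding Inv_def by blast
      then have "InvG k F x0 F'' (\<iota> (lab F'' (\<nu> t)))" using S2 B by blast
      then show ?thesis unfolding Inv_def using h B(1) wV by blast
    qed
  qed
qed

lemma stay:
  assumes F: "F \<in> EH" and p: "p \<in> GV F" and w: "(p, q) \<in> (Sg E col (Suc (2 * idx F)))\<^sup>*"
  shows "q \<in> GV F"
  using w
proof (induction rule: rtrancl_induct)
  case base then show ?case using p .
next
  case (step q q')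
  have zE: "{q, q'} \<in> E" and zc: "col {q, q'} \<noteq> Suc (2 * idx F)" using step.hyps(2) unfolding Sg_def by auto
  from E_cases[OF zE] show ?case
  proof
    assume "\<exists>F\<in>EH. \<exists>x\<in>V0. \<exists>y\<in>V0. x \<noteq> y \<and> {x, y} \<in> E0 \<and> {q, q'} = {\<psi> F x, \<psi> F y}"
    then obtain F'' a b where A: "F'' \<in> EH" "a \<in> V0" "b \<in> V0" "{q, q'} = {\<psi> F'' a, \<psi> F'' b}" by blast
    have "q \<in> {\<psi> F'' a, \<psi> F'' b}" "q' \<in> {\<psi> F'' a, \<psi> F'' b}" using A(4) by (metis insertI1 insert_commute)+
    then have "q \<in> GV F''" "q' \<in> GV F''" using psi_in A by auto
    then show ?thesis using GV_same A(1) F step.IH by metis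
  next
    assume "\<exists>F\<in>EH. \<exists>t\<in>T. \<nu> t \<in> F \<and> {q, q'} = {\<psi> F (\<iota> (lab F (\<nu> t))), t}"
    then obtain F'' t where B: "F'' \<in> EH" "t \<in> T" "\<nu> t \<in> F''" "{q, q'} = {\<psi> F'' (\<iota> (lab F'' (\<nu> t))), t}" by blast
    have wV: "\<iota> (lab F'' (\<nu> t)) \<in> V0" using lab_in B by blast
    have "q \<noteq> t" using step.IH B(2) F GV_notT by blast
    then have "q = \<psi> F'' (\<iota> (lab F'' (\<nu> t)))" using B(4) by (metis doubleton_eq_iff)
    then have "F'' = F" using psi_in[OF B(1) wV] GV_same B(1) F step.IH by metis
    then show ?thesis using zc col_mt B by simp
  qed
qed

lemma Lk_props: "Lk k i i" "Lk k i j \<Longrightarrow> Lk k j i" "Lk k i j \<Longrightarrow> Lk k j l \<Longrightarrow> Lk k i l"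
  unfolding Lk_def Rk_def using Sg_sym by (auto intro: rtrancl_trans)

lemma Q_col: "Qprop E col"
  unfolding Qprop_def
proof (intro allI impI notI)
  fix u v assume uv: "{u, v} \<in> E" and p: "(u, v) \<in> (Sg E col (col {u, v}))\<^sup>*"
  have tr: "\<forall>vs Fs l. closed_walk EH vs Fs l \<longrightarrow> mg_bridgeless (walk_label_mset lab vs Fs l)"
    using tranq unfolding tranquil_with_def by blast
  from E_cases[OF uv] show False
  proof
    assume "\<exists>F\<in>EH. \<exists>x\<in>V0. \<exists>y\<in>V0. x \<noteq> y \<and> {x, y} \<in> E0 \<and> {u, v} = {\<psi> F x, \<psi> F y}"
    then obtain F x y where A: "F \<in> EH" "x \<in> V0" "y \<in> V0" "{x, y} \<in> E0" "{u, v} = {\<psi> F x, \<psi> F y}" by blast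
    define k where "k = c0 {x, y}"
    have "col {u, v} = 2 * k" using A col_GE k_def by simp
    then have p': "(u, v) \<in> (Sg E col (2 * k))\<^sup>*" using p by simp
    have "(u = \<psi> F x \<and> v = \<psi> F y) \<or> (u = \<psi> F y \<and> v = \<psi> F x)" using A(5) by (simp add: doubleton_eq_iff)
    then have pp: "(\<psi> F x, \<psi> F y) \<in> (Sg E col (2 * k))\<^sup>*"
    proof (elim disjE)
      assume "u = \<psi> F x \<and> v = \<psi> F y" then show ?thesis using p' by simp
    next
      assume "u = \<psi> F y \<and> v = \<psi> F x" then show ?thesis using Sg_sym[OF p'] by simp
    qed
    have I: "Inv k F x (\<psi> F y)" by (rule walk_inv[OF A(1) A(2) pp])
    have "\<psi> F y \<notin> T" using psi_notT A by blast
    then obtain F' y' where y': "F' \<in> EH" "y' \<in> V0" "\<psi> F y = \<psi> F' y'" "InvG k F x F' y'" using I unfolding Inv_def by blast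
    have "F = F' \<and> y = y'" by (rule psi_inj[OF A(1) y'(1) A(3) y'(2) y'(3)])
    then have IG: "InvG k F x F y" using y' by simp
    have "(x, y) \<in> Rk k"
      using IG unfolding InvG_def
    proof
      assume "F = F \<and> (x, y) \<in> Rk k" then show ?thesis by simp
    next
      assume "\<exists>m ws hs. chainH EH lab (Lk k) F (xl x) m ws hs \<and> ws (m-1) \<in> F \<and> (\<iota> (lab F (ws (m-1))), y) \<in> Rk k"
      then obtain m ws hs where h: "chainH EH lab (Lk k) F (xl x) m ws hs" "ws (m-1) \<in> F" "(\<iota> (lab F (ws (m-1))), y) \<in> Rk k" by blast
      have en: "Lk k (lab F (ws (m-1))) (xl y)" unfolding Lk_def using h(3) iota_xl A(3) by simp
      have "Lk k (xl x) (xl y)"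
        by (rule chain_main[where L="Lk k", OF tr _ _ _ A(1) h(1) h(2)])
          (use Lk_props en in blast)+
      then show ?thesis unfolding Lk_def using iota_xl A(2,3) by simp
    qed
    moreover have "(x, y) \<notin> (Sg E0 c0 (c0 {x, y}))\<^sup>*" using Q0[unfolded Qprop_def, rule_format, OF A(4)] .
    ultimately show False unfolding Rk_def k_def by simp
  next
    assume "\<exists>F\<in>EH. \<exists>t\<in>T. \<nu> t \<in> F \<and> {u, v} = {\<psi> F (\<iota> (lab F (\<nu> t))), t}"
    then obtain F t where B: "F \<in> EH" "t \<in> T" "\<nu> t \<in> F" "{u, v} = {\<psi> F (\<iota> (lab F (\<nu> t))), t}" by blast
    let ?w = "\<psi> F (\<iota> (lab F (\<nu> t)))"
    have wV: "\<iota> (lab F (\<nu> t)) \<in> V0" using lab_in B by blast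
    have "col {u, v} = Suc (2 * idx F)" using B col_mt by simp
    then have p': "(u, v) \<in> (Sg E col (Suc (2 * idx F)))\<^sup>*" using p by simp
    have "(u = ?w \<and> v = t) \<or> (u = t \<and> v = ?w)" using B(4) by (simp add: doubleton_eq_iff)
    then have "(?w, t) \<in> (Sg E col (Suc (2 * idx F)))\<^sup>*"
    proof (elim disjE)
      assume "u = ?w \<and> v = t" then show ?thesis using p' by simp
    next
      assume "u = t \<and> v = ?w" then show ?thesis using Sg_sym[OF p'] by simp
    qed
    then have "t \<in> GV F" using stay[OF B(1) psi_in[OF B(1) wV]] by blast
    then show False using GV_notT B by blast
  qed
qed

end




lemma main_ind:
  assumes "constructed g k V E"
  shows "\<exists>c :: nat set \<Rightarrow> nat. proper_edge_colouring E c \<and> Qprop E c"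
  using assms
proof (induction rule: constructed.induct)
  case (base v)
  show ?case unfolding proper_edge_colouring_def Qprop_def by simp
next
  case (step k V0 E0 r \<iota> VH EH lab \<nu> T GV GE \<psi> V E)
  obtain c0 :: "nat set \<Rightarrow> nat" where c0: "proper_edge_colouring E0 c0" "Qprop E0 c0" using step.IH by blast
  have "finite VH" "\<forall>F\<in>EH. F \<subseteq> VH" using \<open>tranquil_with r VH EH lab\<close> unfolding tranquil_with_def uniform_hypergraph_def by auto
  then have "finite EH" by (meson Pow_iff finite_Pow_iff finite_subset subsetI)
  then obtain idx :: "nat set \<Rightarrow> nat" and n where "idx ` EH = {i. i < n}" "inj_on idx EH"
    using finite_imp_inj_to_nat_seg by blast
  interpret S: step_ctx V0 E0 c0 r \<iota> VH EH lab \<nu> T GV GE \<psi> E idx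
    by (unfold_locales) (use step.hyps c0 \<open>inj_on idx EH\<close> in auto)
  show ?case using S.proper_col S.Q_col by blast
qed

theorem lemma4p1:
  fixes g k :: nat and V :: "nat set" and E :: "nat set set"
  assumes "g \<ge> 1" and "k \<ge> 1" and "constructed g k V E"
  shows "\<exists>c :: nat set \<Rightarrow> nat. proper_edge_colouring E c \<and> no_colour_once_on_cycles E c"
  using main_ind[OF assms(3)] Q_imp_nco by blast


end
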